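(* Let $(A,\succ,\prec)$ be an anti-pre-Novikov algebra and $s=\sum_i a_i\otimes b_i\in A\otimes A$. For $\zeta,\eta\in A^*$: (a) $P(s):=s_{12}\circ s_{13}+s_{23}\odot s_{13}+s_{12}\prec s_{23}=0$ iff $T_{\tau(s)}(\zeta)\circ T_{\tau(s)}(\eta)=T_{\tau(s)}(L_{\odot}^*(T_s(\zeta))\eta+R_{\prec}^*(T_{\tau(s)}(\eta))\zeta)$ for all $\zeta,\eta$; (b) $P_1(s):=s_{12}\prec s_{13}-s_{13}\odot s_{23}+s_{12}\circ s_{23}=0$ iff $T_{\tau(s)}(\zeta)\prec T_{\tau(s)}(\eta)=T_{\tau(s)}(R_{\circ}^*(T_{\tau(s)}(\eta))\zeta-R_{\odot}^*(T_s(\zeta))\eta)$ for all $\zeta,\eta$; (c) $P_2(s):=s_{12}\succ s_{13}+s_{13}\star s_{23}-s_{12}\succ s_{23}=0$ iff $T_{\tau(s)}(\zeta)\succ T_{\tau(s)}(\eta)=T_{\tau(s)}(L_{\star}^*(T_s(\zeta))\eta-R_{\succ}^*(T_{\tau(s)}(\eta))\zeta)$ for all $\zeta,\eta$; (d) $P_3(s):=s_{13}\circ s_{23}-s_{13}\prec s_{12}-s_{12}\odot s_{23}=0$ iff $T_s(\zeta)\circ T_s(\eta)=T_s(-L_{\odot}^*(T_s(\zeta))\eta-R_{\prec}^*(T_{\tau(s)}(\eta))\zeta)$ for all $\zeta,\eta$; (e) $P_4(s):=s_{13}\circ s_{12}-s_{13}\prec s_{23}-s_{23}\odot s_{12}=0$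 iff $T_s(\zeta)\prec T_s(\eta)=T_s(R_{\odot}^*(T_s(\zeta))\eta-R_{\circ}^*(T_{\tau(s)}(\eta))\zeta)$ for all $\zeta,\eta$; (f) $P_5(s):=s_{12}\star s_{23}-s_{13}\succ s_{12}-s_{13}\succ s_{23}=0$ iff $T_s(\zeta)\succ T_s(\eta)=T_s(R_{\succ}^*(T_{\tau(s)}(\eta))\zeta-L_{\star}^*(T_s(\zeta))\eta)$ for all $\zeta,\eta$.
   Context: $A$ is finite-dimensional over a field $k$. An anti-pre-Novikov algebra is $(A,\succ,\prec)$ such that with $x\circ y=x\succ y+x\prec y$: $(x\circ y-y\circ x)\succ z=y\succ(x\succ z)-x\succ(y\succ z)$; $x\prec(y\circ z)=(y\succ x)\prec z-(x\prec y)\prec z-y\succ(x\prec z)$; $(x\circ y)\succ z=-(x\succ z)\prec y$; $(x\prec y)\prec z=(x\prec z)\prec y$; $(x\circ y-y\circ x)\prec z=x\succ(y\circ z)-y\succ(x\circ z)$. Further $x\odot y=x\succ y+y\prec x$, $x\star y=x\circ y+y\circ x$. For an operation $\ast$, $L_\ast(x)y=x\ast y$, $R_\ast(x)y=y\ast x$; $L_{\star}=L_{\circ}+R_{\circ}$, $L_{\odot}=L_{\succ}+R_{\prec}$, $R_{\odot}=R_{\succ}+L_{\prec}$. For $f:A\to\mathrm{End}(A)$, $f^*(x)\in\mathrm{End}(A^* )$ is given by $\langle f^*(x)\zeta,y\rangle=-\langle\zeta,f(x)y\rangle$. $\tau(x\otimes y)=y\otimes x$. $T_s:A^*\to A$ is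 defined by $\langle T_s(\zeta),\eta\rangle=\langle s,\zeta\otimes\eta\rangle$. Tensor notation, for $s=\sum_i a_i\otimes b_i$ and an operation $\ast$ (sums over $i,j$): $s_{12}\ast s_{13}=\sum a_i\ast a_j\otimes b_i\otimes b_j$; $s_{13}\ast s_{12}=\sum a_i\ast a_j\otimes b_j\otimes b_i$; $s_{12}\ast s_{23}=\sum a_i\otimes b_i\ast a_j\otimes b_j$; $s_{13}\ast s_{23}=\sum a_i\otimes a_j\otimes b_i\ast b_j$; $s_{23}\ast s_{13}=\sum a_j\otimes a_i\otimes b_i\ast b_j$; $s_{23}\ast s_{12}=\sum a_j\otimes a_i\ast b_j\otimes b_i$. (General rule: $s_{pq}$ places $a_i$ in tensor slot $p$ and $b_i$ in slot $q$; the product is taken in the common slot, with the factor from the left term on the left.) *)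

theory Defs
  imports Main "HOL-Library.Function_Algebras"
begin

text \<open>Coordinates: the finite-dimensional k-vector space A is k^n, modelled as
  functions 'n \<Rightarrow> 'k for a finite index type 'n; the dual A* is also 'n \<Rightarrow> 'k
  with the pairing below. An element
  s of A\<otimes>A is given as a finite list of pairs (a_i, b_i), s = sum a_i \<otimes> b_i.\<close>

definition pair :: "('n::finite \<Rightarrow> 'k::field) \<Rightarrow> ('n \<Rightarrow> 'k) \<Rightarrow> 'k" where
  "pair \<zeta> x = (\<Sum>i\<in>UNIV. \<zeta> i * x i)"

definition smul :: "'k::field \<Rightarrow> ('n \<Rightarrow> 'k) \<Rightarrow> ('n \<Rightarrow> 'k)" where
  "smul c v = (\<lambda>i. c * v i)"

definition bilinear_op :: "(('n \<Rightarrow> 'k::field) \<Rightarrow> ('n \<Rightarrow> 'k) \<Rightarrow> ('n \<Rightarrow> 'k)) \<Rightarrow> bool" where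
  "bilinear_op f \<longleftrightarrow>
     (\<forall>x y z. f (x + y) z = f x z + f y z) \<and>
     (\<forall>x y z. f x (y + z) = f x y + f x z) \<and>
     (\<forall>c x y. f (smul c x) y = smul c (f x y)) \<and>
     (\<forall>c x y. f x (smul c y) = smul c (f x y))"

definition circ where "circ sc pc x y = sc x y + pc x y"
definition odot where "odot sc pc x y = sc x y + pc y x"
definition star where "star sc pc x y = circ sc pc x y + circ sc pc y x"

definition anti_pre_Novikov ::
  "(('n::finite \<Rightarrow> 'k::field) \<Rightarrow> ('n \<Rightarrow> 'k) \<Rightarrow> ('n \<Rightarrow> 'k)) \<Rightarrow>
   (('n \<Rightarrow> 'k) \<Rightarrow> ('n \<Rightarrow> 'k) \<Rightarrow> ('n \<Rightarrow> 'k)) \<Rightarrow> bool" where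
  "anti_pre_Novikov sc pc \<longleftrightarrow> bilinear_op sc \<and> bilinear_op pc \<and>
    (\<forall>x y z. sc (circ sc pc x y - circ sc pc y x) z = sc y (sc x z) - sc x (sc y z)) \<and>
    (\<forall>x y z. pc x (circ sc pc y z) = pc (sc y x) z - pc (pc x y) z - sc y (pc x z)) \<and>
    (\<forall>x y z. sc (circ sc pc x y) z = - pc (sc x z) y) \<and>
    (\<forall>x y z. pc (pc x y) z = pc (pc x z) y) \<and>
    (\<forall>x y z. pc (circ sc pc x y - circ sc pc y x) z = sc x (circ sc pc y z) - sc y (circ sc pc x z))"

definition Lop where "Lop f x = (\<lambda>y. f x y)"
definition Rop where "Rop f x = (\<lambda>y. f y x)"

definition dualrep :: "(('n::finite \<Rightarrow> 'k::field) \<Rightarrow> ('n \<Rightarrow> 'k) \<Rightarrow> ('n \<Rightarrow> 'k)) \<Rightarrow>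
    ('n \<Rightarrow> 'k) \<Rightarrow> ('n \<Rightarrow> 'k) \<Rightarrow> ('n \<Rightarrow> 'k)" where
  "dualrep f x \<zeta> = (THE \<xi>. \<forall>y. pair \<xi> y = - pair \<zeta> (f x y))"

text \<open>\<tau>(s) and T_s: \<langle>T_s(\<zeta>), \<eta>\<rangle> = \<langle>s, \<zeta> \<otimes> \<eta>\<rangle>.\<close>
definition tau :: "('a \<times> 'a) list \<Rightarrow> ('a \<times> 'a) list" where
  "tau ss = map (\<lambda>p. (snd p, fst p)) ss"

definition Tmap :: "(('n::finite \<Rightarrow> 'k::field) \<times> ('n \<Rightarrow> 'k)) list \<Rightarrow> ('n \<Rightarrow> 'k) \<Rightarrow> ('n \<Rightarrow> 'k)" where
  "Tmap ss \<zeta> = (THE x. \<forall>\<eta>. pair \<eta> x = (\<Sum>p\<leftarrow>ss. pair \<zeta> (fst p) * pair \<eta> (snd p)))"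

type_synonym ('n,'k) t3 = "'n \<Rightarrow> 'n \<Rightarrow> 'n \<Rightarrow> 'k"

definition s12_13 :: "(('n \<Rightarrow> 'k::field) \<Rightarrow> ('n \<Rightarrow> 'k) \<Rightarrow> ('n \<Rightarrow> 'k)) \<Rightarrow> (('n \<Rightarrow> 'k) \<times> ('n \<Rightarrow> 'k)) list \<Rightarrow> ('n,'k) t3" where
  "s12_13 op ss = (\<lambda>x y z. \<Sum>p\<leftarrow>ss. \<Sum>q\<leftarrow>ss. op (fst p) (fst q) x * snd p y * snd q z)"
definition s13_12 :: "(('n \<Rightarrow> 'k::field) \<Rightarrow> ('n \<Rightarrow> 'k) \<Rightarrow> ('n \<Rightarrow> 'k)) \<Rightarrow> (('n \<Rightarrow> 'k) \<times> ('n \<Rightarrow> 'k)) list \<Rightarrow> ('n,'k) t3" where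
  "s13_12 op ss = (\<lambda>x y z. \<Sum>p\<leftarrow>ss. \<Sum>q\<leftarrow>ss. op (fst p) (fst q) x * snd q y * snd p z)"
definition s12_23 :: "(('n \<Rightarrow> 'k::field) \<Rightarrow> ('n \<Rightarrow> 'k) \<Rightarrow> ('n \<Rightarrow> 'k)) \<Rightarrow> (('n \<Rightarrow> 'k) \<times> ('n \<Rightarrow> 'k)) list \<Rightarrow> ('n,'k) t3" where
  "s12_23 op ss = (\<lambda>x y z. \<Sum>p\<leftarrow>ss. \<Sum>q\<leftarrow>ss. fst p x * op (snd p) (fst q) y * snd q z)"
definition s13_23 :: "(('n \<Rightarrow> 'k::field) \<Rightarrow> ('n \<Rightarrow> 'k) \<Rightarrow> ('n \<Rightarrow> 'k)) \<Rightarrow> (('n \<Rightarrow> 'k) \<times> ('n \<Rightarrow> 'k)) list \<Rightarrow> ('n,'k) t3" where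
  "s13_23 op ss = (\<lambda>x y z. \<Sum>p\<leftarrow>ss. \<Sum>q\<leftarrow>ss. fst p x * fst q y * op (snd p) (snd q) z)"
definition s23_13 :: "(('n \<Rightarrow> 'k::field) \<Rightarrow> ('n \<Rightarrow> 'k) \<Rightarrow> ('n \<Rightarrow> 'k)) \<Rightarrow> (('n \<Rightarrow> 'k) \<times> ('n \<Rightarrow> 'k)) list \<Rightarrow> ('n,'k) t3" where
  "s23_13 op ss = (\<lambda>x y z. \<Sum>p\<leftarrow>ss. \<Sum>q\<leftarrow>ss. fst q x * fst p y * op (snd p) (snd q) z)"
definition s23_12 :: "(('n \<Rightarrow> 'k::field) \<Rightarrow> ('n \<Rightarrow> 'k) \<Rightarrow> ('n \<Rightarrow> 'k)) \<Rightarrow> (('n \<Rightarrow> 'k) \<times> ('n \<Rightarrow> 'k)) list \<Rightarrow> ('n,'k) t3" where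
  "s23_12 op ss = (\<lambda>x y z. \<Sum>p\<leftarrow>ss. \<Sum>q\<leftarrow>ss. fst q x * op (fst p) (snd q) y * snd p z)"

end

theory Submission
  imports Defs
begin

definition delta :: "'n \<Rightarrow> 'n \<Rightarrow> 'k::field" where "delta a = (\<lambda>x. if x = a then 1 else 0)"

lemma pair_delta_l: "pair (delta a) (x::'n::finite\<Rightarrow>'k::field) = x a"
proof -
  have "pair (delta a) x = (\<Sum>i\<in>UNIV. if i = a then x i else 0)"
    unfolding pair_def delta_def by (rule sum.cong) auto
  then show ?thesis by simp
qed
lemma pair_delta_r: "pair (x::'n::finite\<Rightarrow>'k::field) (delta a) = x a"
proof -
  have "pair x (delta a) = (\<Sum>i\<in>UNIV. if i = a then x i else 0)"
    unfolding pair_def delta_def by (rule sum.cong) auto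
  then show ?thesis by simp
qed

lemma pair_ext_r: "(\<And>\<theta>. pair \<theta> u = pair \<theta> (v::'n::finite\<Rightarrow>'k::field)) \<Longrightarrow> u = v"
  by (metis pair_delta_l ext)
lemma pair_ext_l: "(\<And>y. pair u y = pair (v::'n::finite\<Rightarrow>'k::field) y) \<Longrightarrow> u = v"
  by (metis pair_delta_r ext)

lemma pair_add_r[simp]: "pair \<theta> (u + v) = pair \<theta> u + pair \<theta> (v::'n::finite\<Rightarrow>'k::field)"
  by (simp add: pair_def sum.distrib algebra_simps)
lemma pair_diff_r[simp]: "pair \<theta> (u - v) = pair \<theta> u - pair \<theta> (v::'n::finite\<Rightarrow>'k::field)"
  by (simp add: pair_def sum_subtractf algebra_simps)
lemma pair_minus_r[simp]: "pair \<theta> (- v) = - pair \<theta> (v::'n::finite\<Rightarrow>'k::field)"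
  by (simp add: pair_def sum_negf)
lemma pair_zero_r[simp]: "pair \<theta> (0::'n::finite\<Rightarrow>'k::field) = 0"
  by (simp add: pair_def)
lemma pair_smul_r[simp]: "pair \<theta> (smul c (v::'n::finite\<Rightarrow>'k::field)) = c * pair \<theta> v"
  by (simp add: pair_def smul_def sum_distrib_left algebra_simps)
lemma pair_add_l[simp]: "pair (u + v) (\<theta>::'n::finite\<Rightarrow>'k::field) = pair u \<theta> + pair v \<theta>"
  by (simp add: pair_def sum.distrib algebra_simps)
lemma pair_diff_l[simp]: "pair (u - v) (\<theta>::'n::finite\<Rightarrow>'k::field) = pair u \<theta> - pair v \<theta>"
  by (simp add: pair_def sum_subtractf algebra_simps)
lemma pair_minus_l[simp]: "pair (- v) (\<theta>::'n::finite\<Rightarrow>'k::field) = - pair v \<theta>"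
  by (simp add: pair_def sum_negf)
lemma pair_sum_list_r[simp]: "pair \<theta> (sum_list (map f xs)) = (\<Sum>p\<leftarrow>xs. pair \<theta> (f p::'n::finite\<Rightarrow>'k::field))"
proof (induction xs)
  case (Cons a xs)
  have "sum_list (map f (a#xs)) = f a + sum_list (map f xs)" by simp
  then show ?case using Cons by (simp only: pair_add_r list.map sum_list.Cons)
qed (simp only: list.map sum_list.Nil pair_zero_r)

lemma bil:
  assumes "bilinear_op f"
  shows "f (u + v) w = f u w + f v w" "f w (u + v) = f w u + f w v"
    "f (smul c u) w = smul c (f u w)" "f w (smul c u) = smul c (f w u)"
  using assms unfolding bilinear_op_def by auto

lemma bil0:
  assumes "bilinear_op f"
  shows "f 0 w = 0" "f w 0 = 0"
proof -
  have "f 0 w = f 0 w + f 0 w" using bil(1)[OF assms, of 0 0 w] by simp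
  then show "f 0 w = 0" by simp
  have "f w 0 = f w 0 + f w 0" using bil(2)[OF assms, of w 0 0] by simp
  then show "f w 0 = 0" by simp
qed

lemma bil_sum_list:
  assumes "bilinear_op f"
  shows "f (sum_list (map g xs)) w = (\<Sum>p\<leftarrow>xs. f (g p) w)"
    "f w (sum_list (map g xs)) = (\<Sum>p\<leftarrow>xs. f w (g p))"
proof (induction xs)
  case (Cons a xs)
  { case 1
  have "sum_list (map g (a#xs)) = g a + sum_list (map g xs)" by simp
  then show ?case using Cons by (simp only: bil[OF assms] list.map sum_list.Cons) }
  { case 2
  have "sum_list (map g (a#xs)) = g a + sum_list (map g xs)" by simp
  then show ?case using Cons by (simp only: bil[OF assms] list.map sum_list.Cons) }
qed (simp_all add: bil0[OF assms])

lemma bil_sum: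
  assumes "bilinear_op f" "finite A"
  shows "f w (sum g A) = (\<Sum>p\<in>A. f w (g p))"
  using assms(2)
proof (induction A rule: finite_induct)
  case (insert x F)
  have "sum g (insert x F) = g x + sum g F" using insert by simp
  then show ?case using insert by (simp only: bil[OF assms(1)] sum.insert[OF insert(1,2)])
qed (simp only: bil0[OF assms(1)] sum.empty)

lemma Tmap_eq: "Tmap ss \<zeta> = (\<Sum>p\<leftarrow>ss. smul (pair \<zeta> (fst p)) (snd p::'n::finite\<Rightarrow>'k::field))"
  unfolding Tmap_def
proof (rule the_equality)
  show "\<forall>\<eta>. pair \<eta> (\<Sum>p\<leftarrow>ss. smul (pair \<zeta> (fst p)) (snd p)) = (\<Sum>p\<leftarrow>ss. pair \<zeta> (fst p) * pair \<eta> (snd p))"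
    by simp
  fix x assume "\<forall>\<eta>. pair \<eta> x = (\<Sum>p\<leftarrow>ss. pair \<zeta> (fst p) * pair \<eta> (snd p))"
  then show "x = (\<Sum>p\<leftarrow>ss. smul (pair \<zeta> (fst p)) (snd p))"
    by (intro pair_ext_r) simp
qed

lemma fun_sum_apply: "(sum g A) i = (\<Sum>a\<in>A. g a i)"
  by (induction A rule: infinite_finite_induct) auto

lemma vec_decomp: "(\<Sum>i\<in>UNIV. smul (y i) (delta i)) = (y::'n::finite\<Rightarrow>'k::field)"
proof (rule ext)
  fix j
  have "(\<Sum>i\<in>UNIV. smul (y i) (delta i)) j = (\<Sum>i\<in>UNIV. if i = j then y j else 0)"
    unfolding fun_sum_apply smul_def delta_def by (rule sum.cong) auto
  then show "(\<Sum>i\<in>UNIV. smul (y i) (delta i)) j = y j" by simp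
qed

lemma dualrep_pair:
  fixes f :: "('n::finite \<Rightarrow> 'k::field) \<Rightarrow> ('n \<Rightarrow> 'k) \<Rightarrow> ('n \<Rightarrow> 'k)"
  assumes a: "\<And>y z. f x (y+z) = f x y + f x z" and m: "\<And>c y. f x (smul c y) = smul c (f x y)"
  shows "pair (dualrep f x \<zeta>) y = - pair \<zeta> (f x y)"
proof -
  have z: "f x 0 = 0" using a[of 0 0] by simp
  have fs: "f x (sum g A) = (\<Sum>p\<in>A. f x (g p))" if "finite A" for g A
    using that
  proof (induction A rule: finite_induct)
    case (insert x' F)
    have "sum g (insert x' F) = g x' + sum g F" using insert by simp
    then show ?case using insert by (simp only: a sum.insert[OF insert(1,2)])
  qed (simp only: z sum.empty)
  define \<xi> where "\<xi> = (\<lambda>i. - pair \<zeta> (f x (delta i)))"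
  have ps: "pair \<zeta> (sum g A) = (\<Sum>p\<in>A. pair \<zeta> (g p))" if "finite A" for g A
    using that
  proof (induction A rule: finite_induct)
    case (insert x' F)
    have "sum g (insert x' F) = g x' + sum g F" using insert by simp
    then show ?case using insert by (simp only: pair_add_r sum.insert[OF insert(1,2)])
  qed (simp only: pair_zero_r sum.empty)
  have P: "\<forall>y. pair \<xi> y = - pair \<zeta> (f x y)"
  proof
    fix y
    have "pair \<zeta> (f x y) = pair \<zeta> (f x (\<Sum>i\<in>UNIV. smul (y i) (delta i)))" by (simp add: vec_decomp)
    also have "\<dots> = (\<Sum>i\<in>UNIV. y i * pair \<zeta> (f x (delta i)))" by (simp add: fs ps m)
    finally show "pair \<xi> y = - pair \<zeta> (f x y)"
      by (simp add: \<xi>_def pair_def sum_negf algebra_simps)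
  qed
  have "\<forall>y. pair (dualrep f x \<zeta>) y = - pair \<zeta> (f x y)"
    unfolding dualrep_def
    by (rule theI[of _ \<xi>]) (use P in \<open>auto intro: pair_ext_l\<close>)
  then show ?thesis by blast
qed


lemma bil_circ: "bilinear_op sc \<Longrightarrow> bilinear_op pc \<Longrightarrow> bilinear_op (circ sc pc)"
  unfolding bilinear_op_def circ_def smul_def by (auto simp: fun_eq_iff algebra_simps)
lemma bil_odot: "bilinear_op sc \<Longrightarrow> bilinear_op pc \<Longrightarrow> bilinear_op (odot sc pc)"
  unfolding bilinear_op_def odot_def smul_def by (auto simp: fun_eq_iff algebra_simps)
lemma bil_star: "bilinear_op sc \<Longrightarrow> bilinear_op pc \<Longrightarrow> bilinear_op (star sc pc)"
  unfolding bilinear_op_def star_def circ_def smul_def by (auto simp: fun_eq_iff algebra_simps)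

lemma dual_L:
  fixes op :: "('n::finite \<Rightarrow> 'k::field) \<Rightarrow> ('n \<Rightarrow> 'k) \<Rightarrow> ('n \<Rightarrow> 'k)"
  assumes "bilinear_op op"
  shows "pair (dualrep (Lop op) x \<zeta>) y = - pair \<zeta> (op x y)"
  using dualrep_pair[of "Lop op" x \<zeta> y] bil[OF assms] unfolding Lop_def by simp
lemma dual_R:
  fixes op :: "('n::finite \<Rightarrow> 'k::field) \<Rightarrow> ('n \<Rightarrow> 'k) \<Rightarrow> ('n \<Rightarrow> 'k)"
  assumes "bilinear_op op"
  shows "pair (dualrep (Rop op) x \<zeta>) y = - pair \<zeta> (op y x)"
  using dualrep_pair[of "Rop op" x \<zeta> y] bil[OF assms] unfolding Rop_def by simp

definition C3 :: "('n::finite,'k::field) t3 \<Rightarrow> ('n \<Rightarrow> 'k) \<Rightarrow> ('n \<Rightarrow> 'k) \<Rightarrow> ('n \<Rightarrow> 'k) \<Rightarrow> 'k" where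
  "C3 T a b c = (\<Sum>x\<in>UNIV. \<Sum>y\<in>UNIV. \<Sum>z\<in>UNIV. a x * b y * c z * T x y z)"

lemma C3_pair: "C3 T a b c = pair a (\<lambda>x. pair b (\<lambda>y. pair c (T x y)))"
  unfolding C3_def pair_def by (simp add: sum_distrib_left mult_ac)

lemma tensor_zero: "T = (\<lambda>x y z. 0) \<longleftrightarrow> (\<forall>a b c. C3 T a b c = 0)"
proof
  assume "\<forall>a b c. C3 T a b c = 0"
  then have "C3 T (delta x) (delta y) (delta z) = 0" for x y z by blast
  then show "T = (\<lambda>x y z. 0)" by (simp add: C3_pair pair_delta_l fun_eq_iff)
qed (simp add: C3_def)

lemma C3_add: "C3 (T1 + T2) a b c = C3 T1 a b c + C3 T2 a b c"
  unfolding C3_def by (simp add: sum.distrib algebra_simps)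
lemma C3_diff: "C3 (T1 - T2) a b c = C3 T1 a b c - C3 T2 a b c"
  unfolding C3_def by (simp add: sum_subtractf algebra_simps)

lemma sum_sum_list_swap: "(\<Sum>x\<in>A. sum_list (map (f x) xs)) = sum_list (map (\<lambda>p. \<Sum>x\<in>A. (f x p::'k::comm_ring)) xs)"
  by (induction xs) (auto simp: sum.distrib)

lemma C3_gen:
  assumes "T = (\<lambda>x y z. \<Sum>p\<leftarrow>ss. \<Sum>q\<leftarrow>ss. A p q x * B p q y * C p q z)"
  shows "C3 T a b c = (\<Sum>p\<leftarrow>ss. \<Sum>q\<leftarrow>ss. pair a (A p q) * pair b (B p q) * pair c (C p q))"
  unfolding assms C3_def pair_def
  apply (simp add: sum_sum_list_swap sum_distrib_left sum_distrib_right sum_list_const_mult[symmetric]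
      sum_list_mult_const[symmetric] mult_ac)
  apply (rule arg_cong[where f=sum_list], rule map_cong[OF refl])+
  apply (rule sum.swap)
  done


lemma C3_s12_13: "C3 (s12_13 op ss) a b c = (\<Sum>p\<leftarrow>ss. \<Sum>q\<leftarrow>ss. pair a (op (fst p) (fst q)) * pair b (snd p) * pair c (snd q))"
  by (rule C3_gen) (simp add: s12_13_def)
lemma C3_s13_12: "C3 (s13_12 op ss) a b c = (\<Sum>p\<leftarrow>ss. \<Sum>q\<leftarrow>ss. pair a (op (fst p) (fst q)) * pair b (snd q) * pair c (snd p))"
  by (rule C3_gen) (simp add: s13_12_def)
lemma C3_s12_23: "C3 (s12_23 op ss) a b c = (\<Sum>p\<leftarrow>ss. \<Sum>q\<leftarrow>ss. pair a (fst p) * pair b (op (snd p) (fst q)) * pair c (snd q))"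
  by (rule C3_gen) (simp add: s12_23_def)
lemma C3_s13_23: "C3 (s13_23 op ss) a b c = (\<Sum>p\<leftarrow>ss. \<Sum>q\<leftarrow>ss. pair a (fst p) * pair b (fst q) * pair c (op (snd p) (snd q)))"
  by (rule C3_gen) (simp add: s13_23_def)
lemma C3_s23_13: "C3 (s23_13 op ss) a b c = (\<Sum>p\<leftarrow>ss. \<Sum>q\<leftarrow>ss. pair a (fst q) * pair b (fst p) * pair c (op (snd p) (snd q)))"
  by (rule C3_gen) (simp add: s23_13_def)
lemma C3_s23_12: "C3 (s23_12 op ss) a b c = (\<Sum>p\<leftarrow>ss. \<Sum>q\<leftarrow>ss. pair a (fst q) * pair b (op (fst p) (snd q)) * pair c (snd p))"
  by (rule C3_gen) (simp add: s23_12_def)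

lemmas C3_simps = C3_add C3_diff C3_s12_13 C3_s13_12 C3_s12_23 C3_s13_23 C3_s23_13 C3_s23_12

lemma sum_list_negf': "(\<Sum>p\<leftarrow>xs. - f p) = - (\<Sum>p\<leftarrow>xs. (f p :: 'k::ab_group_add))"
  by (induction xs) auto

lemma sum_list_swap: "(\<Sum>p\<leftarrow>xs. \<Sum>q\<leftarrow>ys. f p q) = (\<Sum>q\<leftarrow>ys. \<Sum>p\<leftarrow>xs. (f p q::'k::comm_ring))"
  by (induction xs) (auto simp: sum_list_addf)

lemma star_comm:
  fixes sc pc :: "('n::finite \<Rightarrow> 'k::field) \<Rightarrow> ('n \<Rightarrow> 'k) \<Rightarrow> ('n \<Rightarrow> 'k)"
  shows "star sc pc x y = star sc pc y x"
  unfolding star_def by (simp add: add.commute)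

lemma case_a:
  fixes sc pc :: "('n::finite \<Rightarrow> 'k::field) \<Rightarrow> ('n \<Rightarrow> 'k) \<Rightarrow> ('n \<Rightarrow> 'k)"
  assumes bs: "bilinear_op sc" and bp: "bilinear_op pc"
  shows "C3 (s12_13 (circ sc pc) s + s23_13 (odot sc pc) s + s12_23 pc s) \<theta> \<zeta> \<eta> = pair \<theta> (circ sc pc (Tmap (tau s) \<zeta>) (Tmap (tau s) \<eta>)) - pair \<theta> (Tmap (tau s) (dualrep (Lop (odot sc pc)) (Tmap s \<zeta>) \<eta> + dualrep (Rop pc) (Tmap (tau s) \<eta>) \<zeta>))"
  using bil_circ[OF bs bp] bil_odot[OF bs bp] bil_star[OF bs bp] bs bp
  apply (simp add: C3_simps Tmap_eq tau_def o_def bil_sum_list bil dual_L dual_R sum_list_addf sum_list_subtractf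
       sum_list_negf' sum_list_const_mult[symmetric] sum_list_mult_const[symmetric] algebra_simps)
  apply (rule sum_list_swap)?
  done

lemma case_b:
  fixes sc pc :: "('n::finite \<Rightarrow> 'k::field) \<Rightarrow> ('n \<Rightarrow> 'k) \<Rightarrow> ('n \<Rightarrow> 'k)"
  assumes bs: "bilinear_op sc" and bp: "bilinear_op pc"
  shows "C3 (s12_13 pc s - s13_23 (odot sc pc) s + s12_23 (circ sc pc) s) \<theta> \<zeta> \<eta> = pair \<theta> (pc (Tmap (tau s) \<zeta>) (Tmap (tau s) \<eta>)) - pair \<theta> (Tmap (tau s) (dualrep (Rop (circ sc pc)) (Tmap (tau s) \<eta>) \<zeta> - dualrep (Rop (odot sc pc)) (Tmap s \<zeta>) \<eta>))"
  using bil_circ[OF bs bp] bil_odot[OF bs bp] bil_star[OF bs bp] bs bp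
  apply (simp add: C3_simps Tmap_eq tau_def o_def bil_sum_list bil dual_L dual_R sum_list_addf sum_list_subtractf
       sum_list_negf' sum_list_const_mult[symmetric] sum_list_mult_const[symmetric] algebra_simps)
  apply (rule sum_list_swap)?
  done

lemma case_c:
  fixes sc pc :: "('n::finite \<Rightarrow> 'k::field) \<Rightarrow> ('n \<Rightarrow> 'k) \<Rightarrow> ('n \<Rightarrow> 'k)"
  assumes bs: "bilinear_op sc" and bp: "bilinear_op pc"
  shows "C3 (s12_13 sc s + s13_23 (star sc pc) s - s12_23 sc s) \<theta> \<zeta> \<eta> = pair \<theta> (sc (Tmap (tau s) \<zeta>) (Tmap (tau s) \<eta>)) - pair \<theta> (Tmap (tau s) (dualrep (Lop (star sc pc)) (Tmap s \<zeta>) \<eta> - dualrep (Rop sc) (Tmap (tau s) \<eta>) \<zeta>))"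
  using bil_circ[OF bs bp] bil_odot[OF bs bp] bil_star[OF bs bp] bs bp
  apply (simp add: C3_simps Tmap_eq tau_def o_def bil_sum_list bil dual_L dual_R sum_list_addf sum_list_subtractf
       sum_list_negf' sum_list_const_mult[symmetric] sum_list_mult_const[symmetric] algebra_simps)
  apply (subst (1) star_comm, rule refl)?
  apply (rule sum_list_swap)?
  done

lemma case_d:
  fixes sc pc :: "('n::finite \<Rightarrow> 'k::field) \<Rightarrow> ('n \<Rightarrow> 'k) \<Rightarrow> ('n \<Rightarrow> 'k)"
  assumes bs: "bilinear_op sc" and bp: "bilinear_op pc"
  shows "C3 (s13_23 (circ sc pc) s - s13_12 pc s - s12_23 (odot sc pc) s) \<zeta> \<eta> \<theta> = pair \<theta> (circ sc pc (Tmap s \<zeta>) (Tmap s \<eta>)) - pair \<theta> (Tmap s (- dualrep (Lop (odot sc pc)) (Tmap s \<zeta>) \<eta> - dualrep (Rop pc) (Tmap (tau s) \<eta>) \<zeta>))"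
  using bil_circ[OF bs bp] bil_odot[OF bs bp] bil_star[OF bs bp] bs bp
  apply (simp add: C3_simps Tmap_eq tau_def o_def bil_sum_list bil dual_L dual_R sum_list_addf sum_list_subtractf
       sum_list_negf' sum_list_const_mult[symmetric] sum_list_mult_const[symmetric] algebra_simps)
  apply (rule sum_list_swap)?
  done

lemma case_e:
  fixes sc pc :: "('n::finite \<Rightarrow> 'k::field) \<Rightarrow> ('n \<Rightarrow> 'k) \<Rightarrow> ('n \<Rightarrow> 'k)"
  assumes bs: "bilinear_op sc" and bp: "bilinear_op pc"
  shows "C3 (s13_12 (circ sc pc) s - s13_23 pc s - s23_12 (odot sc pc) s) \<zeta> \<eta> \<theta> = pair \<theta> (Tmap s (dualrep (Rop (odot sc pc)) (Tmap s \<zeta>) \<eta> - dualrep (Rop (circ sc pc)) (Tmap (tau s) \<eta>) \<zeta>)) - pair \<theta> (pc (Tmap s \<zeta>) (Tmap s \<eta>))"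
  using bil_circ[OF bs bp] bil_odot[OF bs bp] bil_star[OF bs bp] bs bp
  apply (simp add: C3_simps Tmap_eq tau_def o_def bil_sum_list bil dual_L dual_R sum_list_addf sum_list_subtractf
       sum_list_negf' sum_list_const_mult[symmetric] sum_list_mult_const[symmetric] algebra_simps)
  apply (rule sum_list_swap)?
  done

lemma case_f:
  fixes sc pc :: "('n::finite \<Rightarrow> 'k::field) \<Rightarrow> ('n \<Rightarrow> 'k) \<Rightarrow> ('n \<Rightarrow> 'k)"
  assumes bs: "bilinear_op sc" and bp: "bilinear_op pc"
  shows "C3 (s12_23 (star sc pc) s - s13_12 sc s - s13_23 sc s) \<zeta> \<eta> \<theta> = pair \<theta> (Tmap s (dualrep (Rop sc) (Tmap (tau s) \<eta>) \<zeta> - dualrep (Lop (star sc pc)) (Tmap s \<zeta>) \<eta>)) - pair \<theta> (sc (Tmap s \<zeta>) (Tmap s \<eta>))"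
  using bil_circ[OF bs bp] bil_odot[OF bs bp] bil_star[OF bs bp] bs bp
  apply (simp add: C3_simps Tmap_eq tau_def o_def bil_sum_list bil dual_L dual_R sum_list_addf sum_list_subtractf
       sum_list_negf' sum_list_const_mult[symmetric] sum_list_mult_const[symmetric] algebra_simps)
  apply (rule sum_list_swap)?
  done

lemma iff_gen1:
  fixes P :: "('n::finite,'k::field) t3"
  assumes "\<And>\<theta> \<zeta> \<eta>. C3 P \<theta> \<zeta> \<eta> = pair \<theta> (V \<zeta> \<eta>) - pair \<theta> (W \<zeta> \<eta>)"
  shows "P = (\<lambda>x y z. 0) \<longleftrightarrow> (\<forall>\<zeta> \<eta>. V \<zeta> \<eta> = W \<zeta> \<eta>)"
  unfolding tensor_zero assms by (auto intro: pair_ext_r)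
lemma iff_gen2:
  fixes P :: "('n::finite,'k::field) t3"
  assumes "\<And>\<theta> \<zeta> \<eta>. C3 P \<zeta> \<eta> \<theta> = pair \<theta> (V \<zeta> \<eta>) - pair \<theta> (W \<zeta> \<eta>)"
  shows "P = (\<lambda>x y z. 0) \<longleftrightarrow> (\<forall>\<zeta> \<eta>. V \<zeta> \<eta> = W \<zeta> \<eta>)"
  unfolding tensor_zero assms by (auto intro: pair_ext_r)
lemma iff_gen3:
  fixes P :: "('n::finite,'k::field) t3"
  assumes "\<And>\<theta> \<zeta> \<eta>. C3 P \<zeta> \<eta> \<theta> = pair \<theta> (W \<zeta> \<eta>) - pair \<theta> (V \<zeta> \<eta>)"
  shows "P = (\<lambda>x y z. 0) \<longleftrightarrow> (\<forall>\<zeta> \<eta>. V \<zeta> \<eta> = W \<zeta> \<eta>)"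
  unfolding tensor_zero assms by (auto intro: pair_ext_r)

theorem mainTheorem6:
  fixes sc pc :: "('n::finite \<Rightarrow> 'k::field) \<Rightarrow> ('n \<Rightarrow> 'k) \<Rightarrow> ('n \<Rightarrow> 'k)"
    and s :: "(('n \<Rightarrow> 'k) \<times> ('n \<Rightarrow> 'k)) list"
  assumes "anti_pre_Novikov sc pc"
  shows
  "(s12_13 (circ sc pc) s + s23_13 (odot sc pc) s + s12_23 pc s = (\<lambda>x y z. 0)
     \<longleftrightarrow> (\<forall>\<zeta> \<eta>. circ sc pc (Tmap (tau s) \<zeta>) (Tmap (tau s) \<eta>) =
        Tmap (tau s) (dualrep (Lop (odot sc pc)) (Tmap s \<zeta>) \<eta> + dualrep (Rop pc) (Tmap (tau s) \<eta>) \<zeta>)))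
   \<and>
   (s12_13 pc s - s13_23 (odot sc pc) s + s12_23 (circ sc pc) s = (\<lambda>x y z. 0)
     \<longleftrightarrow> (\<forall>\<zeta> \<eta>. pc (Tmap (tau s) \<zeta>) (Tmap (tau s) \<eta>) =
        Tmap (tau s) (dualrep (Rop (circ sc pc)) (Tmap (tau s) \<eta>) \<zeta> - dualrep (Rop (odot sc pc)) (Tmap s \<zeta>) \<eta>)))
   \<and>
   (s12_13 sc s + s13_23 (star sc pc) s - s12_23 sc s = (\<lambda>x y z. 0)
     \<longleftrightarrow> (\<forall>\<zeta> \<eta>. sc (Tmap (tau s) \<zeta>) (Tmap (tau s) \<eta>) =
        Tmap (tau s) (dualrep (Lop (star sc pc)) (Tmap s \<zeta>) \<eta> - dualrep (Rop sc) (Tmap (tau s) \<eta>) \<zeta>)))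
   \<and>
   (s13_23 (circ sc pc) s - s13_12 pc s - s12_23 (odot sc pc) s = (\<lambda>x y z. 0)
     \<longleftrightarrow> (\<forall>\<zeta> \<eta>. circ sc pc (Tmap s \<zeta>) (Tmap s \<eta>) =
        Tmap s (- dualrep (Lop (odot sc pc)) (Tmap s \<zeta>) \<eta> - dualrep (Rop pc) (Tmap (tau s) \<eta>) \<zeta>)))
   \<and>
   (s13_12 (circ sc pc) s - s13_23 pc s - s23_12 (odot sc pc) s = (\<lambda>x y z. 0)
     \<longleftrightarrow> (\<forall>\<zeta> \<eta>. pc (Tmap s \<zeta>) (Tmap s \<eta>) =
        Tmap s (dualrep (Rop (odot sc pc)) (Tmap s \<zeta>) \<eta> - dualrep (Rop (circ sc pc)) (Tmap (tau s) \<eta>) \<zeta>)))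
   \<and>
   (s12_23 (star sc pc) s - s13_12 sc s - s13_23 sc s = (\<lambda>x y z. 0)
     \<longleftrightarrow> (\<forall>\<zeta> \<eta>. sc (Tmap s \<zeta>) (Tmap s \<eta>) =
        Tmap s (dualrep (Rop sc) (Tmap (tau s) \<eta>) \<zeta> - dualrep (Lop (star sc pc)) (Tmap s \<zeta>) \<eta>)))"
proof -
  have bs: "bilinear_op sc" and bp: "bilinear_op pc"
    using assms unfolding anti_pre_Novikov_def by auto
  show ?thesis
    apply (intro conjI)
         apply (rule iff_gen1, rule case_a[OF bs bp])
        apply (rule iff_gen1, rule case_b[OF bs bp])
       apply (rule iff_gen1, rule case_c[OF bs bp])
      apply (rule iff_gen2, rule case_d[OF bs bp])
     apply (rule iff_gen3, rule case_e[OF bs bp])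
    apply (rule iff_gen3, rule case_f[OF bs bp])
    done
qed

end
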